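(* Let $H_1,H_2$ be separable Hilbert spaces, $K\in B(H_1)$, $L\in B(H_2)$. Let $\{x_n\}_{n\geqslant1}$ be a $K$-frame for $H_1$ and $\{y_n\}_{n\geqslant1}$ an $L$-frame for $H_2$, with analysis operators $\theta_1$ and $\theta_2$ respectively. If $\overline{R(\theta_1)}=R(\theta_2)^\perp$ in $\ell^2$, then $\{x_n\oplus y_n\}_{n\geqslant1}$ is a $K\oplus L$-minimal frame for $H_1\oplus H_2$.
   Context: $H_1\oplus H_2$ is the Hilbert space of pairs $x\oplus y$ with inner product $\langle x\oplus y,a\oplus b\rangle=\langle x,a\rangle+\langle y,b\rangle$; $(K\oplus L)(x\oplus y)=K(x)\oplus L(y)$. For a Hilbert space $H$ and $K\in B(H)$, $\{z_n\}_{n\geqslant1}$ is a $K$-frame if there are $A,B>0$ with $A\|K^*z\|^2\leq\sum_n|\langle z,z_n\rangle|^2\leq B\|z\|^2$ for all $z\in H$. Its analysis operator is $\theta:H\to\ell^2$, $\theta(z)=\{\langle z,z_n\rangle\}_n$, and its synthesis operator is $T=\theta^*:\ell^2\to H$, $T(\{a_n\})=\sum_na_nz_n$. A $K$-frame is $K$-minimal if its synthesis operator is injective. $R(\cdot)$ denotes range. *)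

theory Defs
  imports "HOL-Analysis.Analysis"
begin

text \<open>Complex Hilbert spaces are encoded via realification: a complex Hilbert space
is a real Hilbert space (type class real_inner + complete_space) together with a
complex structure J (multiplication by the imaginary unit), which is real-linear,
satisfies J (J x) = - x and is orthogonal.  The complex inner product is
linear in the first argument.\<close>

definition cstruct :: "('a::real_inner \<Rightarrow> 'a) \<Rightarrow> bool" where
  "cstruct J \<longleftrightarrow> linear J \<and> (\<forall>x. J (J x) = - x) \<and> (\<forall>x y. inner (J x) (J y) = inner x y)"

definition cscale :: "('a::real_vector \<Rightarrow> 'a) \<Rightarrow> complex \<Rightarrow> 'a \<Rightarrow> 'a" where
  "cscale J c v = Re c *\<^sub>R v + Im c *\<^sub>R J v"

definition cinner :: "('a::real_inner \<Rightarrow> 'a) \<Rightarrow> 'a \<Rightarrow> 'a \<Rightarrow> complex" where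
  "cinner J x y = Complex (inner x y) (- inner (J x) y)"

text \<open>bounded complex-linear operators, i.e. elements of B(H)\<close>
definition cbounded :: "('a::real_inner \<Rightarrow> 'a) \<Rightarrow> ('a \<Rightarrow> 'a) \<Rightarrow> bool" where
  "cbounded J K \<longleftrightarrow> bounded_linear K \<and> (\<forall>x. K (J x) = J (K x))"

definition hadj :: "('a::real_inner \<Rightarrow> 'a) \<Rightarrow> ('a \<Rightarrow> 'a) \<Rightarrow> ('a \<Rightarrow> 'a)" where
  "hadj J K = (THE A. \<forall>x y. cinner J (K x) y = cinner J x (A y))"

definition l2 :: "(nat \<Rightarrow> complex) set" where
  "l2 = {a. summable (\<lambda>n. (cmod (a n))\<^sup>2)}"

definition l2_inner :: "(nat \<Rightarrow> complex) \<Rightarrow> (nat \<Rightarrow> complex) \<Rightarrow> complex" where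
  "l2_inner a b = (\<Sum>n. a n * cnj (b n))"

definition l2_norm :: "(nat \<Rightarrow> complex) \<Rightarrow> real" where
  "l2_norm a = sqrt (\<Sum>n. (cmod (a n))\<^sup>2)"

definition l2_closure :: "(nat \<Rightarrow> complex) set \<Rightarrow> (nat \<Rightarrow> complex) set" where
  "l2_closure S = {b \<in> l2. \<forall>e>0. \<exists>a\<in>S. l2_norm (\<lambda>n. a n - b n) < e}"

definition l2_orth :: "(nat \<Rightarrow> complex) set \<Rightarrow> (nat \<Rightarrow> complex) set" where
  "l2_orth S = {b \<in> l2. \<forall>a\<in>S. l2_inner a b = 0}"

definition analysis_op :: "('a::real_inner \<Rightarrow> 'a) \<Rightarrow> (nat \<Rightarrow> 'a) \<Rightarrow> 'a \<Rightarrow> (nat \<Rightarrow> complex)" where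
  "analysis_op J z x = (\<lambda>n. cinner J x (z n))"

definition synthesis_op :: "('a::real_inner \<Rightarrow> 'a) \<Rightarrow> (nat \<Rightarrow> 'a) \<Rightarrow> (nat \<Rightarrow> complex) \<Rightarrow> 'a" where
  "synthesis_op J z a = (\<Sum>n. cscale J (a n) (z n))"

definition kframe :: "('a::real_inner \<Rightarrow> 'a) \<Rightarrow> ('a \<Rightarrow> 'a) \<Rightarrow> (nat \<Rightarrow> 'a) \<Rightarrow> bool" where
  "kframe J K z \<longleftrightarrow> (\<exists>A B. A > 0 \<and> B > 0 \<and>
     (\<forall>x. summable (\<lambda>n. (cmod (cinner J x (z n)))\<^sup>2) \<and>
          A * (norm (hadj J K x))\<^sup>2 \<le> (\<Sum>n. (cmod (cinner J x (z n)))\<^sup>2) \<and>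
          (\<Sum>n. (cmod (cinner J x (z n)))\<^sup>2) \<le> B * (norm x)\<^sup>2))"

definition kminimal :: "('a::real_inner \<Rightarrow> 'a) \<Rightarrow> ('a \<Rightarrow> 'a) \<Rightarrow> (nat \<Rightarrow> 'a) \<Rightarrow> bool" where
  "kminimal J K z \<longleftrightarrow> kframe J K z \<and> inj_on (synthesis_op J z) l2"

text \<open>direct sums: the library's product type carries the inner product
(x,y) \<bullet> (a,b) = x \<bullet> a + y \<bullet> b\<close>
definition dsum_op :: "('a \<Rightarrow> 'a) \<Rightarrow> ('b \<Rightarrow> 'b) \<Rightarrow> ('a \<times> 'b \<Rightarrow> 'a \<times> 'b)" where
  "dsum_op K L = (\<lambda>(x, y). (K x, L y))"

end

theory Submission
  imports Defs
begin


lemma riesz_aux_ineq: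
  fixes a b :: real
  assumes "\<And>t. a * t \<le> t^2 * b"
  shows "a = 0"
proof (rule ccontr)
  assume "a \<noteq> 0"
  define t where "t = a / (2 * (\<bar>b\<bar> + 1))"
  have h: "a * t \<le> t^2 * \<bar>b\<bar>" using assms[of t]
    by (smt (verit, ccfv_SIG) mult_left_mono zero_le_power2 abs_ge_self)
  have pos: "\<bar>b\<bar> + 1 > 0" by simp
  have at: "a = 2 * (\<bar>b\<bar> + 1) * t" using pos by (simp add: t_def)
  have tnz: "t \<noteq> 0" using \<open>a \<noteq> 0\<close> at by auto
  have "t^2 * (2 * (\<bar>b\<bar> + 1)) \<le> t^2 * \<bar>b\<bar>" using h at by (simp add: power2_eq_square algebra_simps)
  moreover have "t^2 > 0" using tnz by simp
  ultimately show False by (smt (verit, best) mult_le_cancel_left_pos)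
qed

lemma riesz:
  fixes f :: "'a::{real_inner,complete_space} \<Rightarrow> real"
  assumes bl: "bounded_linear f"
  shows "\<exists>v. \<forall>x. f x = inner x v"
proof (cases "\<forall>x. f x = 0")
  case True then show ?thesis by (intro exI[of _ 0]) simp
next
  case False
  then obtain x0 where x0: "f x0 \<noteq> 0" by blast
  interpret f: bounded_linear f by fact
  obtain C where C: "C > 0" "\<And>x. norm (f x) \<le> norm x * C" using f.pos_bounded by blast
  define S where "S = f ` {x. norm x \<le> 1}"
  have Sne: "S \<noteq> {}" unfolding S_def by (auto intro!: exI[of _ 0])
  have Sbdd: "bdd_above S" unfolding S_def
  proof (rule bdd_aboveI[of _ C], clarify)
    fix x :: 'a assume "norm x \<le> 1"
    hence "norm x * C \<le> C" using C by (simp add: mult_left_le_one_le)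
    thus "f x \<le> C" using C(2)[of x] by simp
  qed
  define N where "N = Sup S"
  have inS: "f x \<le> N" if "norm x \<le> 1" for x
    unfolding N_def by (rule cSup_upper[OF _ Sbdd]) (use that S_def in auto)
  have x0nz: "x0 \<noteq> 0" using x0 by auto
  define x1 where "x1 = (sgn (f x0) / norm x0) *\<^sub>R x0"
  have "norm x1 \<le> 1" using x0nz by (simp add: x1_def abs_sgn)
  moreover have "f x1 > 0" using x0 x0nz
    by (simp add: x1_def f.scaleR sgn_real_def)
  ultimately have Npos: "N > 0" using inS by fastforce
  have bound: "f x \<le> N * norm x" for x
  proof (cases "x = 0")
    case True thus ?thesis by (simp add: f.zero)
  next
    case False
    have "f ((1 / norm x) *\<^sub>R x) \<le> N" by (rule inS) (use False in simp)
    thus ?thesis using False by (simp add: f.scaleR field_simps)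
  qed
  have absbound: "\<bar>f x\<bar> \<le> N * norm x" for x
    using bound[of x] bound[of "-x"] by (simp add: f.neg)
  have "\<exists>z. norm z \<le> 1 \<and> N - 1 / (real n + 1) < f z" for n :: nat
  proof -
    have "N - 1 / (real n + 1) < Sup S" unfolding N_def[symmetric] by simp
    then obtain s where "s \<in> S" "N - 1 / (real n + 1) < s" using less_cSup_iff[OF Sne Sbdd] by blast
    thus ?thesis unfolding S_def by auto
  qed
  then obtain z where z1: "\<And>n. norm (z n) \<le> 1" and z2: "\<And>n. N - 1 / (real n + 1) < f (z n)"
    by metis
  have dist_bound: "(norm (z m - z n))^2 < 4 * (1 / (real m + 1) + 1 / (real n + 1)) / N" for m n
  proof -
    let ?a = "z m" and ?b = "z n"
    have par: "(norm (?a - ?b))^2 + (norm (?a + ?b))^2 = 2 * (norm ?a)^2 + 2 * (norm ?b)^2"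
      by (simp add: power2_norm_eq_inner inner_add_left inner_add_right inner_diff_left inner_diff_right inner_commute)
    have na: "(norm ?a)^2 \<le> 1" "(norm ?b)^2 \<le> 1" using z1 by (auto simp: power_le_one)
    have s2: "norm (?a + ?b) \<le> 2" using norm_triangle_ineq[of ?a ?b] z1[of m] z1[of n] by linarith
    have "f (?a + ?b) > 2 * N - (1 / (real m + 1) + 1 / (real n + 1))"
      using z2[of m] z2[of n] by (simp add: f.add)
    hence "N * norm (?a + ?b) > 2 * N - (1 / (real m + 1) + 1 / (real n + 1))"
      using bound[of "?a + ?b"] by linarith
    hence "(2 - norm (?a + ?b)) * N < (1 / (real m + 1) + 1 / (real n + 1))"
      by (simp add: algebra_simps)
    hence lo: "2 - norm (?a + ?b) < (1 / (real m + 1) + 1 / (real n + 1)) / N"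
      using Npos by (simp only: pos_less_divide_eq)
    have "(norm (?a - ?b))^2 \<le> 4 - (norm (?a + ?b))^2" using par na by linarith
    also have "\<dots> = (2 - norm (?a + ?b)) * (2 + norm (?a + ?b))" by (simp add: algebra_simps power2_eq_square)
    also have "\<dots> \<le> (2 - norm (?a + ?b)) * 4"
      using s2 by (intro mult_left_mono) auto
    also have "\<dots> < 4 * ((1 / (real m + 1) + 1 / (real n + 1)) / N)" using lo by (simp only: mult.commute[of _ 4] mult_less_cancel_left_pos[of 4] zero_less_numeral)
    also have "\<dots> = 4 * (1 / (real m + 1) + 1 / (real n + 1)) / N" by simp
    finally show ?thesis .
  qed
  have "Cauchy z"
  proof (rule metric_CauchyI)
    fix e :: real assume e: "e > 0"
    obtain M :: nat where M: "inverse (real (Suc M)) < e^2 * N / 8"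
      using reals_Archimedean[of "e^2 * N / 8"] e Npos by auto
    show "\<exists>M. \<forall>m\<ge>M. \<forall>n\<ge>M. dist (z m) (z n) < e"
    proof (intro exI allI impI)
      fix m n assume mn: "M \<le> m" "M \<le> n"
      have i1: "1 / (real m + 1) \<le> inverse (real (Suc M))" using mn
        by (simp add: inverse_eq_divide frac_le)
      have i2: "1 / (real n + 1) \<le> inverse (real (Suc M))" using mn
        by (simp add: inverse_eq_divide frac_le)
      have "(norm (z m - z n))^2 < 4 * (1 / (real m + 1) + 1 / (real n + 1)) / N" by (rule dist_bound)
      also have "\<dots> \<le> 4 * (2 * inverse (real (Suc M))) / N"
        using i1 i2 Npos by (intro divide_right_mono) auto
      also have "\<dots> < 4 * (2 * (e^2 * N / 8)) / N"
        using M Npos by (intro divide_strict_right_mono) (simp_all add: mult_ac)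
      also have "\<dots> = e^2" using Npos by simp
      finally have "(norm (z m - z n))^2 < e^2" .
      thus "dist (z m) (z n) < e" using e by (simp add: dist_norm power_less_imp_less_base)
    qed
  qed
  then obtain u where zu: "z \<longlonglongrightarrow> u" using Cauchy_convergent_iff convergent_def by blast
  have nu: "norm u \<le> 1"
    by (rule LIMSEQ_le_const2[OF tendsto_norm[OF zu]]) (use z1 in auto)
  have fz: "(\<lambda>n. f (z n)) \<longlonglongrightarrow> f u" by (rule f.tendsto[OF zu])
  have "(\<lambda>n. N - 1 / (real n + 1)) \<longlonglongrightarrow> N - 0"
    by (intro tendsto_diff tendsto_const) (use LIMSEQ_inverse_real_of_nat in \<open>simp add: inverse_eq_divide add.commute\<close>)
  hence "N \<le> f u"
    by (intro LIMSEQ_le[OF _ fz]) (use z2 less_imp_le in auto)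
  hence fu: "f u = N" using inS[OF nu] by simp
  have nu1: "norm u = 1" using bound[of u] fu nu Npos by (simp add: field_simps)
  have key: "f x = N * inner u x" for x
  proof -
    have "(2 * N * f x - 2 * N^2 * inner u x) * t \<le> t^2 * (N^2 * (norm x)^2 - (f x)^2)" for t
    proof -
      have "(f (u + t *\<^sub>R x))^2 \<le> (N * norm (u + t *\<^sub>R x))^2"
        using power_mono[OF absbound[of "u + t *\<^sub>R x"] abs_ge_zero, of 2] by simp
      moreover have "f (u + t *\<^sub>R x) = N + t * f x" by (simp add: f.add f.scaleR fu)
      moreover have "(norm (u + t *\<^sub>R x))^2 = 1 + 2 * t * inner u x + t^2 * (norm x)^2"
      proof -
        have "(norm (u + t *\<^sub>R x))^2 = inner (u + t *\<^sub>R x) (u + t *\<^sub>R x)" by (rule power2_norm_eq_inner)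
        also have "\<dots> = inner u u + 2 * t * inner u x + t^2 * inner x x"
          by (simp add: inner_add_left inner_add_right inner_commute algebra_simps power2_eq_square)
        also have "inner u u = 1" using nu1 by (simp add: power2_norm_eq_inner[symmetric])
        also have "inner x x = (norm x)^2" by (simp add: power2_norm_eq_inner)
        finally show ?thesis .
      qed
      ultimately have "(N + t * f x)^2 \<le> N^2 * (1 + 2 * t * inner u x + t^2 * (norm x)^2)"
        by (simp add: power_mult_distrib)
      thus ?thesis by (simp add: algebra_simps power2_eq_square)
    qed
    hence "2 * N * f x - 2 * N^2 * inner u x = 0" by (rule riesz_aux_ineq)
    thus ?thesis using Npos by (simp add: power2_eq_square algebra_simps)
  qed
  show ?thesis by (intro exI[of _ "N *\<^sub>R u"]) (simp add: key inner_commute)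
qed


lemma real_adj:
  fixes K :: "'a::{real_inner,complete_space} \<Rightarrow> 'a"
  assumes "bounded_linear K"
  shows "\<exists>A. \<forall>p q. inner (K p) q = inner p (A q)"
proof -
  have "\<forall>q. \<exists>v. \<forall>p. inner (K p) q = inner p v"
  proof
    fix q
    have "bounded_linear (\<lambda>p. inner (K p) q)"
      using bounded_linear_compose[OF bounded_linear_inner_left assms] .
    thus "\<exists>v. \<forall>p. inner (K p) q = inner p v" by (rule riesz)
  qed
  thus ?thesis by metis
qed

lemma hadj_eq:
  assumes comm: "\<And>x. K (J x) = J (K x)" and adj: "\<And>p q. inner (K p) q = inner p (A q)"
  shows "hadj J K = A"
  unfolding hadj_def
proof (rule the_equality)
  show "\<forall>x y. cinner J (K x) y = cinner J x (A y)"
    by (simp add: cinner_def adj comm[symmetric])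
next
  fix B assume B: "\<forall>x y. cinner J (K x) y = cinner J x (B y)"
  show "B = A"
  proof
    fix y
    have "\<And>x. inner x (B y) = inner x (A y)"
      using B adj by (metis cinner_def complex.sel(1))
    hence "inner (B y - A y) (B y - A y) = 0" by (simp add: inner_diff_right)
    thus "B y = A y" by simp
  qed
qed

lemma hadj_dsum:
  fixes J1 K :: "'a::{real_inner, complete_space} \<Rightarrow> 'a"
    and J2 L :: "'b::{real_inner, complete_space} \<Rightarrow> 'b"
  assumes "cbounded J1 K" "cbounded J2 L"
  shows "hadj (dsum_op J1 J2) (dsum_op K L) = dsum_op (hadj J1 K) (hadj J2 L)"
proof -
  obtain A1 where A1: "\<And>p q. inner (K p) q = inner p (A1 q)"
    using real_adj[of K] assms(1) unfolding cbounded_def by blast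
  obtain A2 where A2: "\<And>p q. inner (L p) q = inner p (A2 q)"
    using real_adj[of L] assms(2) unfolding cbounded_def by blast
  have h1: "hadj J1 K = A1" by (rule hadj_eq[OF _ A1]) (use assms(1) cbounded_def in auto)
  have h2: "hadj J2 L = A2" by (rule hadj_eq[OF _ A2]) (use assms(2) cbounded_def in auto)
  have "hadj (dsum_op J1 J2) (dsum_op K L) = dsum_op A1 A2"
    by (rule hadj_eq) (use assms in \<open>auto simp: dsum_op_def cbounded_def A1 A2 split: prod.splits\<close>)
  thus ?thesis by (simp add: h1 h2)
qed

lemma cinner_dsum:
  "cinner (dsum_op J1 J2) (p, q) (a, b) = cinner J1 p a + cinner J2 q b"
  by (simp add: cinner_def dsum_op_def complex_eq_iff)

lemma cstruct_skew:
  assumes "cstruct J" shows "inner (J v) x = - inner v (J x)"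
proof -
  have "inner (J v) x = inner (J (J v)) (J x)" using assms unfolding cstruct_def by metis
  also have "\<dots> = - inner v (J x)" using assms by (simp add: cstruct_def)
  finally show ?thesis .
qed

lemma inner_cscale:
  assumes "cstruct J"
  shows "inner (cscale J c x) v = Re (c * cnj (cinner J v x))"
  using cstruct_skew[OF assms, of v x]
  by (simp add: cscale_def cinner_def inner_add_left inner_add_right inner_commute)

lemma cinner_J:
  assumes "cstruct J"
  shows "cinner J (J p) x = \<i> * cinner J p x"
proof -
  have "J (J p) = - p" using assms by (simp add: cstruct_def)
  thus ?thesis by (simp add: cinner_def complex_eq_iff)
qed


lemma synth_finite_bound:
  fixes z :: "nat \<Rightarrow> 'a::real_inner"
  assumes J: "cstruct J" and B: "B > 0"
    and bes: "\<And>v. summable (\<lambda>n. (cmod (cinner J v (z n)))\<^sup>2) \<and> (\<Sum>n. (cmod (cinner J v (z n)))\<^sup>2) \<le> B * (norm v)\<^sup>2"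
    and F: "finite F"
  shows "norm (\<Sum>n\<in>F. cscale J (a n) (z n)) \<le> sqrt B * sqrt (\<Sum>n\<in>F. (cmod (a n))\<^sup>2)"
proof -
  define s where "s = (\<Sum>n\<in>F. cscale J (a n) (z n))"
  define w where "w n = cinner J s (z n)" for n
  have "(norm s)^2 = inner s s" by (rule power2_norm_eq_inner)
  also have "\<dots> = (\<Sum>n\<in>F. inner (cscale J (a n) (z n)) s)"
    by (subst (1) s_def) (rule inner_sum_left)
  also have "\<dots> = (\<Sum>n\<in>F. Re (a n * cnj (w n)))" by (simp add: inner_cscale[OF J] w_def)
  also have "\<dots> \<le> (\<Sum>n\<in>F. \<bar>cmod (a n)\<bar> * \<bar>cmod (w n)\<bar>)"
    by (rule sum_mono) (metis abs_norm_cancel complex_Re_le_cmod complex_mod_cnj norm_mult)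
  also have "\<dots> \<le> L2_set (\<lambda>n. cmod (a n)) F * L2_set (\<lambda>n. cmod (w n)) F"
    by (rule L2_set_mult_ineq)
  also have "L2_set (\<lambda>n. cmod (w n)) F \<le> sqrt B * norm s"
  proof -
    have "(\<Sum>n\<in>F. (cmod (w n))^2) \<le> (\<Sum>n. (cmod (w n))^2)"
      using bes[of s] F by (intro sum_le_suminf) (auto simp: w_def)
    also have "\<dots> \<le> B * (norm s)^2" using bes[of s] by (simp add: w_def)
    finally have "sqrt (\<Sum>n\<in>F. (cmod (w n))^2) \<le> sqrt (B * (norm s)^2)" by simp
    thus ?thesis by (simp add: L2_set_def real_sqrt_mult)
  qed
  hence "L2_set (\<lambda>n. cmod (a n)) F * L2_set (\<lambda>n. cmod (w n)) F \<le> L2_set (\<lambda>n. cmod (a n)) F * (sqrt B * norm s)"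
    by (intro mult_left_mono) (auto simp: L2_set_def sum_nonneg)
  finally have *: "(norm s)^2 \<le> sqrt (\<Sum>n\<in>F. (cmod (a n))\<^sup>2) * sqrt B * norm s"
    by (simp add: L2_set_def mult_ac)
  show ?thesis
  proof (cases "norm s = 0")
    case True thus ?thesis unfolding s_def[symmetric] using B by (simp add: sum_nonneg)
  next
    case False
    hence "norm s > 0" by simp
    with * have "norm s * norm s \<le> (sqrt (\<Sum>n\<in>F. (cmod (a n))\<^sup>2) * sqrt B) * norm s"
      by (simp add: power2_eq_square)
    hence "norm s \<le> sqrt (\<Sum>n\<in>F. (cmod (a n))\<^sup>2) * sqrt B"
      using \<open>norm s > 0\<close> by (simp add: mult_le_cancel_right)
    thus ?thesis unfolding s_def[symmetric] by (simp add: mult_ac)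
  qed
qed

lemma summable_CauchyI_rn:
  fixes f :: "nat \<Rightarrow> 'a::{real_normed_vector, complete_space}"
  assumes r: "\<And>e. e > 0 \<Longrightarrow> \<exists>N. \<forall>m\<ge>N. \<forall>n. norm (sum f {m..<n}) < e"
  shows "summable f"
  unfolding summable_iff_convergent Cauchy_convergent_iff [symmetric] Cauchy_iff
proof clarify
  fix e :: real
  assume "0 < e"
  with r obtain N where N: "\<And>m n. m \<ge> N \<Longrightarrow> norm (sum f {m..<n}) < e"
    by blast
  have "norm (sum f {..<m} - sum f {..<n}) < e" if "m\<ge>N" "n\<ge>N" for m n
  proof (cases m n rule: linorder_class.le_cases)
    assume "m \<le> n"
    then show ?thesis
      by (metis N finite_lessThan lessThan_minus_lessThan lessThan_subset_iff norm_minus_commute sum_diff \<open>m\<ge>N\<close>)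
  next
    assume "n \<le> m"
    then show ?thesis
      by (metis N finite_lessThan lessThan_minus_lessThan lessThan_subset_iff sum_diff \<open>n\<ge>N\<close>)
  qed
  then show "\<exists>M. \<forall>m\<ge>M. \<forall>n\<ge>M. norm (sum f {..<m} - sum f {..<n}) < e"
    by blast
qed

lemma synth_summable:
  fixes z :: "nat \<Rightarrow> 'a::{real_inner,complete_space}"
  assumes J: "cstruct J" and B: "B > 0"
    and bes: "\<And>v. summable (\<lambda>n. (cmod (cinner J v (z n)))\<^sup>2) \<and> (\<Sum>n. (cmod (cinner J v (z n)))\<^sup>2) \<le> B * (norm v)\<^sup>2"
    and a: "a \<in> l2"
  shows "summable (\<lambda>n. cscale J (a n) (z n))"
proof (rule summable_CauchyI_rn)
  fix e :: real assume e: "e > 0"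
  have sa: "summable (\<lambda>n. (cmod (a n))^2)" using a by (simp add: l2_def)
  obtain N where N: "\<And>m n. m \<ge> N \<Longrightarrow> norm (\<Sum>i\<in>{m..<n}. (cmod (a i))^2) < e^2 / B"
    using sa[unfolded summable_Cauchy] e B by (meson divide_pos_pos zero_less_power)
  show "\<exists>N. \<forall>m\<ge>N. \<forall>n. norm (\<Sum>i\<in>{m..<n}. cscale J (a i) (z i)) < e"
  proof (intro exI allI impI)
    fix m n assume m: "m \<ge> N"
    have "norm (\<Sum>i\<in>{m..<n}. cscale J (a i) (z i)) \<le> sqrt B * sqrt (\<Sum>i\<in>{m..<n}. (cmod (a i))^2)"
      by (rule synth_finite_bound[OF J B bes]) simp
    also have "\<dots> < sqrt B * sqrt (e^2 / B)"
    proof -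
      have "(\<Sum>i\<in>{m..<n}. (cmod (a i))^2) < e^2 / B"
        using N[OF m, of n] by (simp add: sum_nonneg)
      thus ?thesis using B by simp
    qed
    also have "\<dots> = e" using B e by (simp add: real_sqrt_mult[symmetric])
    finally show "norm (\<Sum>i\<in>{m..<n}. cscale J (a i) (z i)) < e" .
  qed
qed




lemma l2_memD: "u \<in> l2 \<Longrightarrow> summable (\<lambda>n. (cmod (u n))\<^sup>2)" by (simp add: l2_def)

lemma l2_prod_summable:
  assumes "u \<in> l2" "v \<in> l2"
  shows "summable (\<lambda>n. cmod (u n) * cmod (v n))" "summable (\<lambda>n. u n * cnj (v n))"
proof -
  have le: "norm (cmod (u n) * cmod (v n)) \<le> ((cmod (u n))\<^sup>2 + (cmod (v n))\<^sup>2) / 2" for n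
    using sum_squares_bound[of "cmod (u n)" "cmod (v n)"] by (simp add: abs_mult)
  have s: "summable (\<lambda>n. ((cmod (u n))\<^sup>2 + (cmod (v n))\<^sup>2) / 2)"
    using l2_memD[OF assms(1)] l2_memD[OF assms(2)] by (intro summable_divide summable_add)
  show "summable (\<lambda>n. cmod (u n) * cmod (v n))"
    by (rule summable_comparison_test'[OF s le])
  hence "summable (\<lambda>n. norm (u n * cnj (v n)))" by (simp add: norm_mult)
  thus "summable (\<lambda>n. u n * cnj (v n))" by (rule summable_norm_cancel)
qed

lemma l2_diff:
  assumes "u \<in> l2" "v \<in> l2"
  shows "(\<lambda>n. u n - v n) \<in> l2"
proof -
  have le: "norm ((cmod (u n - v n))\<^sup>2) \<le> 2 * (cmod (u n))\<^sup>2 + 2 * (cmod (v n))\<^sup>2" for n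
  proof -
    have "cmod (u n - v n) \<le> cmod (u n) + cmod (v n)" by (rule norm_triangle_ineq4)
    hence "(cmod (u n - v n))\<^sup>2 \<le> (cmod (u n) + cmod (v n))\<^sup>2" by (simp add: power_mono)
    also have "\<dots> \<le> 2 * (cmod (u n))\<^sup>2 + 2 * (cmod (v n))\<^sup>2"
      using zero_le_power2[of "cmod (u n) - cmod (v n)"] unfolding power2_sum power2_diff by linarith
    finally show ?thesis by simp
  qed
  have "summable (\<lambda>n. 2 * (cmod (u n))\<^sup>2 + 2 * (cmod (v n))\<^sup>2)"
    using l2_memD[OF assms(1)] l2_memD[OF assms(2)] by (intro summable_add summable_mult)
  thus ?thesis unfolding l2_def by (auto intro: summable_comparison_test'[OF _ le])
qed

lemma cmod_add_sq: "(cmod (a + b))\<^sup>2 = (cmod a)\<^sup>2 + (cmod b)\<^sup>2 + 2 * Re (b * cnj a)"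
  unfolding cmod_power2 by (simp add: power2_eq_square algebra_simps)

lemma synth_zero_orth:
  fixes z :: "nat \<Rightarrow> 'a::{real_inner,complete_space}"
  assumes J: "cstruct J" and B: "B > 0"
    and bes: "\<And>v. summable (\<lambda>n. (cmod (cinner J v (z n)))\<^sup>2) \<and> (\<Sum>n. (cmod (cinner J v (z n)))\<^sup>2) \<le> B * (norm v)\<^sup>2"
    and d: "d \<in> l2" and T0: "synthesis_op J z d = 0"
  shows "l2_inner (analysis_op J z p) d = 0"
proof -
  have thl2: "analysis_op J z q \<in> l2" for q using bes[of q] by (simp add: l2_def analysis_op_def)
  have sg: "summable (\<lambda>n. cinner J q (z n) * cnj (d n))" for q
    using l2_prod_summable(2)[OF thl2 d] by (simp add: analysis_op_def)
  have ss: "summable (\<lambda>n. cscale J (d n) (z n))" by (rule synth_summable[OF J B bes d])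
  have R: "Re (l2_inner (analysis_op J z q) d) = 0" for q
  proof -
    have "Re (l2_inner (analysis_op J z q) d) = (\<Sum>n. Re (cinner J q (z n) * cnj (d n)))"
      unfolding l2_inner_def analysis_op_def by (rule bounded_linear.suminf[OF bounded_linear_Re sg])
    also have "\<dots> = (\<Sum>n. inner (cscale J (d n) (z n)) q)"
    proof (rule suminf_cong)
      fix n
      have "Re (cinner J q (z n) * cnj (d n)) = Re (d n * cnj (cinner J q (z n)))"
        by (simp add: algebra_simps)
      thus "Re (cinner J q (z n) * cnj (d n)) = inner (cscale J (d n) (z n)) q"
        by (simp add: inner_cscale[OF J])
    qed
    also have "\<dots> = inner (\<Sum>n. cscale J (d n) (z n)) q"
      by (rule bounded_linear.suminf[OF bounded_linear_inner_left ss, symmetric])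
    also have "\<dots> = 0" using T0 by (simp add: synthesis_op_def)
    finally show ?thesis .
  qed
  have "l2_inner (analysis_op J z (J p)) d = \<i> * l2_inner (analysis_op J z p) d"
    unfolding l2_inner_def analysis_op_def cinner_J[OF J]
    by (simp add: mult.assoc suminf_mult[OF sg[of p]])
  hence "Im (l2_inner (analysis_op J z p) d) = 0" using R[of "J p"] by simp
  thus ?thesis using R[of p] by (simp add: complex_eq_iff)
qed


lemma sums_Pair_lemma:
  assumes "f sums s" "g sums t"
  shows "(\<lambda>n. (f n, g n)) sums (s, t)"
proof -
  have eq: "(\<Sum>i<n. (f i, g i)) = (\<Sum>i<n. f i, \<Sum>i<n. g i)" for n by (induct n) (auto simp: zero_prod_def)
  show ?thesis using assms unfolding sums_def eq by (rule tendsto_Pair)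
qed

lemma cscale_diff: "cscale J (a - b) v = cscale J a v - cscale J b v"
  by (simp add: cscale_def algebra_simps scaleR_diff_left)

lemma l2_small:
  assumes d: "d \<in> l2" and c: "c \<in> l2" and o: "l2_inner c d = 0"
  shows "(\<Sum>n. (cmod (d n))\<^sup>2) \<le> (\<Sum>n. (cmod (c n - d n))\<^sup>2)"
proof -
  have sd: "summable (\<lambda>n. (cmod (d n))\<^sup>2)" using d by (rule l2_memD)
  have scd: "summable (\<lambda>n. (cmod (c n - d n))\<^sup>2)" using l2_diff[OF c d] by (rule l2_memD)
  have sr: "summable (\<lambda>n. Re (c n * cnj (d n)))" by (rule summable_Re[OF l2_prod_summable(2)[OF c d]])
  have reo: "(\<Sum>n. Re (c n * cnj (d n))) = 0"
    using bounded_linear.suminf[OF bounded_linear_Re l2_prod_summable(2)[OF c d]] o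
    by (simp add: l2_inner_def)
  have pt: "(cmod (d n))\<^sup>2 \<le> ((cmod (c n - d n))\<^sup>2 + (cmod (d n))\<^sup>2) / 2 + Re (c n * cnj (d n))" for n
  proof -
    have e: "(cmod (d n))\<^sup>2 = Re ((d n - c n) * cnj (d n)) + Re (c n * cnj (d n))"
      unfolding cmod_power2 by (simp add: power2_eq_square algebra_simps)
    have "Re ((d n - c n) * cnj (d n)) \<le> cmod (d n - c n) * cmod (d n)"
      by (metis complex_Re_le_cmod complex_mod_cnj norm_mult)
    also have "\<dots> \<le> ((cmod (c n - d n))\<^sup>2 + (cmod (d n))\<^sup>2) / 2"
      using sum_squares_bound[of "cmod (c n - d n)" "cmod (d n)"] by (simp add: norm_minus_commute)
    finally show ?thesis using e by linarith
  qed
  have sg: "summable (\<lambda>n. ((cmod (c n - d n))\<^sup>2 + (cmod (d n))\<^sup>2) / 2 + Re (c n * cnj (d n)))"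
    using scd sd sr by (intro summable_add summable_divide)
  have "(\<Sum>n. (cmod (d n))\<^sup>2) \<le> (\<Sum>n. ((cmod (c n - d n))\<^sup>2 + (cmod (d n))\<^sup>2) / 2 + Re (c n * cnj (d n)))"
    by (rule suminf_le[OF pt sd sg])
  also have "\<dots> = ((\<Sum>n. (cmod (c n - d n))\<^sup>2) + (\<Sum>n. (cmod (d n))\<^sup>2)) / 2"
    using scd sd sr reo by (simp add: suminf_add[symmetric] suminf_divide summable_add)
  finally show ?thesis by simp
qed

theorem proposition2p20:
  fixes J1 K :: "'a::{real_inner, complete_space} \<Rightarrow> 'a"
    and J2 L :: "'b::{real_inner, complete_space} \<Rightarrow> 'b"
    and x :: "nat \<Rightarrow> 'a" and y :: "nat \<Rightarrow> 'b"
  assumes "cstruct J1" and "cstruct J2"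
    and "separable_space (euclidean :: 'a topology)"
    and "separable_space (euclidean :: 'b topology)"
    and "cbounded J1 K" and "cbounded J2 L"
    and "kframe J1 K x" and "kframe J2 L y"
    and "l2_closure (range (analysis_op J1 x)) = l2_orth (range (analysis_op J2 y))"
  shows "kminimal (dsum_op J1 J2) (dsum_op K L) (\<lambda>n. (x n, y n))"
proof -
  note J1 = assms(1) and J2 = assms(2) and hyp = assms(9)
  obtain A1 B1 where AB1: "A1 > 0" "B1 > 0" and
    F1: "\<And>p. summable (\<lambda>n. (cmod (cinner J1 p (x n)))\<^sup>2) \<and>
          A1 * (norm (hadj J1 K p))\<^sup>2 \<le> (\<Sum>n. (cmod (cinner J1 p (x n)))\<^sup>2) \<and>
          (\<Sum>n. (cmod (cinner J1 p (x n)))\<^sup>2) \<le> B1 * (norm p)\<^sup>2"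
    using assms(7) unfolding kframe_def by blast
  obtain A2 B2 where AB2: "A2 > 0" "B2 > 0" and
    F2: "\<And>q. summable (\<lambda>n. (cmod (cinner J2 q (y n)))\<^sup>2) \<and>
          A2 * (norm (hadj J2 L q))\<^sup>2 \<le> (\<Sum>n. (cmod (cinner J2 q (y n)))\<^sup>2) \<and>
          (\<Sum>n. (cmod (cinner J2 q (y n)))\<^sup>2) \<le> B2 * (norm q)\<^sup>2"
    using assms(8) unfolding kframe_def by blast
  have bes1: "\<And>v. summable (\<lambda>n. (cmod (cinner J1 v (x n)))\<^sup>2) \<and> (\<Sum>n. (cmod (cinner J1 v (x n)))\<^sup>2) \<le> B1 * (norm v)\<^sup>2"
    using F1 by blast
  have bes2: "\<And>v. summable (\<lambda>n. (cmod (cinner J2 v (y n)))\<^sup>2) \<and> (\<Sum>n. (cmod (cinner J2 v (y n)))\<^sup>2) \<le> B2 * (norm v)\<^sup>2"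
    using F2 by blast
  have th1: "analysis_op J1 x p \<in> l2" for p using F1[of p] by (simp add: l2_def analysis_op_def)
  have th2: "analysis_op J2 y q \<in> l2" for q using F2[of q] by (simp add: l2_def analysis_op_def)
  have orth: "l2_inner (analysis_op J2 y q) (analysis_op J1 x p) = 0" for p q
  proof -
    have "analysis_op J1 x p \<in> l2_closure (range (analysis_op J1 x))"
      unfolding l2_closure_def using th1[of p] by (auto simp: l2_norm_def intro!: exI[of _ p])
    thus ?thesis unfolding hyp l2_orth_def by auto
  qed
  have hd: "hadj (dsum_op J1 J2) (dsum_op K L) = dsum_op (hadj J1 K) (hadj J2 L)"
    by (rule hadj_dsum[OF assms(5) assms(6)])
  have frame: "kframe (dsum_op J1 J2) (dsum_op K L) (\<lambda>n. (x n, y n))"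
    unfolding kframe_def
  proof (rule exI[of _ "min A1 A2"], rule exI[of _ "max B1 B2"], intro conjI allI)
    show "min A1 A2 > 0" "max B1 B2 > 0" using AB1 AB2 by auto
    fix z :: "'a \<times> 'b"
    obtain p q where z: "z = (p, q)" by fastforce
    define \<alpha> where "\<alpha> n = cinner J1 p (x n)" for n
    define \<beta> where "\<beta> n = cinner J2 q (y n)" for n
    have ce: "cinner (dsum_op J1 J2) z (x n, y n) = \<alpha> n + \<beta> n" for n
      by (simp add: z cinner_dsum \<alpha>_def \<beta>_def)
    have sa: "summable (\<lambda>n. (cmod (\<alpha> n))\<^sup>2)" using F1[of p] by (simp add: \<alpha>_def)
    have sb: "summable (\<lambda>n. (cmod (\<beta> n))\<^sup>2)" using F2[of q] by (simp add: \<beta>_def)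
    have sc: "summable (\<lambda>n. \<beta> n * cnj (\<alpha> n))"
      using l2_prod_summable(2)[OF th2[of q] th1[of p]] by (simp add: \<alpha>_def \<beta>_def analysis_op_def)
    have sr: "summable (\<lambda>n. 2 * Re (\<beta> n * cnj (\<alpha> n)))" by (intro summable_mult summable_Re sc)
    have r0: "(\<Sum>n. 2 * Re (\<beta> n * cnj (\<alpha> n))) = 0"
    proof -
      have "(\<Sum>n. Re (\<beta> n * cnj (\<alpha> n))) = Re (\<Sum>n. \<beta> n * cnj (\<alpha> n))"
        by (rule bounded_linear.suminf[OF bounded_linear_Re sc, symmetric])
      also have "\<dots> = 0" using orth[of q p] by (simp add: l2_inner_def analysis_op_def \<alpha>_def \<beta>_def)
      finally have "(\<Sum>n. Re (\<beta> n * cnj (\<alpha> n))) = 0" .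
      thus ?thesis by (subst suminf_mult[OF summable_Re[OF sc]]) simp
    qed
    have eqf: "(\<lambda>n. (cmod (cinner (dsum_op J1 J2) z (x n, y n)))\<^sup>2) =
               (\<lambda>n. (cmod (\<alpha> n))\<^sup>2 + (cmod (\<beta> n))\<^sup>2 + 2 * Re (\<beta> n * cnj (\<alpha> n)))"
      by (simp add: ce cmod_add_sq)
    have ssum: "summable (\<lambda>n. (cmod (\<alpha> n))\<^sup>2 + (cmod (\<beta> n))\<^sup>2 + 2 * Re (\<beta> n * cnj (\<alpha> n)))"
      using sa sb sr by (intro summable_add)
    have S: "(\<Sum>n. (cmod (\<alpha> n))\<^sup>2 + (cmod (\<beta> n))\<^sup>2 + 2 * Re (\<beta> n * cnj (\<alpha> n))) =
             (\<Sum>n. (cmod (\<alpha> n))\<^sup>2) + (\<Sum>n. (cmod (\<beta> n))\<^sup>2)"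
      using sa sb sr r0 by (simp add: suminf_add[symmetric] summable_add)
    show "summable (\<lambda>n. (cmod (cinner (dsum_op J1 J2) z (x n, y n)))\<^sup>2)"
      unfolding eqf by (rule ssum)
    have nz: "(norm z)\<^sup>2 = (norm p)\<^sup>2 + (norm q)\<^sup>2" by (simp add: z norm_Pair)
    have nh: "(norm (hadj (dsum_op J1 J2) (dsum_op K L) z))\<^sup>2 = (norm (hadj J1 K p))\<^sup>2 + (norm (hadj J2 L q))\<^sup>2"
      unfolding hd z by (simp add: dsum_op_def norm_Pair)
    have l1: "A1 * (norm (hadj J1 K p))\<^sup>2 \<le> (\<Sum>n. (cmod (\<alpha> n))\<^sup>2)" using F1[of p] by (simp add: \<alpha>_def)
    have l2': "A2 * (norm (hadj J2 L q))\<^sup>2 \<le> (\<Sum>n. (cmod (\<beta> n))\<^sup>2)" using F2[of q] by (simp add: \<beta>_def)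
    have u1: "(\<Sum>n. (cmod (\<alpha> n))\<^sup>2) \<le> B1 * (norm p)\<^sup>2" using F1[of p] by (simp add: \<alpha>_def)
    have u2: "(\<Sum>n. (cmod (\<beta> n))\<^sup>2) \<le> B2 * (norm q)\<^sup>2" using F2[of q] by (simp add: \<beta>_def)
    have "min A1 A2 * (norm (hadj (dsum_op J1 J2) (dsum_op K L) z))\<^sup>2
          = min A1 A2 * (norm (hadj J1 K p))\<^sup>2 + min A1 A2 * (norm (hadj J2 L q))\<^sup>2"
      by (simp add: nh algebra_simps)
    also have "\<dots> \<le> A1 * (norm (hadj J1 K p))\<^sup>2 + A2 * (norm (hadj J2 L q))\<^sup>2"
      by (intro add_mono mult_right_mono) auto
    also have "\<dots> \<le> (\<Sum>n. (cmod (cinner (dsum_op J1 J2) z (x n, y n)))\<^sup>2)"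
      unfolding eqf S using l1 l2' by linarith
    finally show "min A1 A2 * (norm (hadj (dsum_op J1 J2) (dsum_op K L) z))\<^sup>2 \<le> (\<Sum>n. (cmod (cinner (dsum_op J1 J2) z (x n, y n)))\<^sup>2)" .
    have "(\<Sum>n. (cmod (cinner (dsum_op J1 J2) z (x n, y n)))\<^sup>2) \<le> B1 * (norm p)\<^sup>2 + B2 * (norm q)\<^sup>2"
      unfolding eqf S using u1 u2 by linarith
    also have "\<dots> \<le> max B1 B2 * (norm p)\<^sup>2 + max B1 B2 * (norm q)\<^sup>2"
      by (intro add_mono mult_right_mono) auto
    also have "\<dots> = max B1 B2 * (norm z)\<^sup>2" by (simp add: nz algebra_simps)
    finally show "(\<Sum>n. (cmod (cinner (dsum_op J1 J2) z (x n, y n)))\<^sup>2) \<le> max B1 B2 * (norm z)\<^sup>2" .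
  qed
  have synth: "synthesis_op (dsum_op J1 J2) (\<lambda>n. (x n, y n)) a = (synthesis_op J1 x a, synthesis_op J2 y a)"
    if a: "a \<in> l2" for a
  proof -
    have s1: "summable (\<lambda>n. cscale J1 (a n) (x n))" by (rule synth_summable[OF J1 AB1(2) bes1 a])
    have s2: "summable (\<lambda>n. cscale J2 (a n) (y n))" by (rule synth_summable[OF J2 AB2(2) bes2 a])
    have "(\<lambda>n. cscale (dsum_op J1 J2) (a n) (x n, y n)) = (\<lambda>n. (cscale J1 (a n) (x n), cscale J2 (a n) (y n)))"
      by (simp add: cscale_def dsum_op_def)
    moreover have "(\<lambda>n. (cscale J1 (a n) (x n), cscale J2 (a n) (y n))) sums (synthesis_op J1 x a, synthesis_op J2 y a)"
      unfolding synthesis_op_def by (rule sums_Pair_lemma[OF summable_sums[OF s1] summable_sums[OF s2]])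
    ultimately show ?thesis unfolding synthesis_op_def[of "dsum_op J1 J2"] by (simp add: sums_iff)
  qed
  have inj: "inj_on (synthesis_op (dsum_op J1 J2) (\<lambda>n. (x n, y n))) l2"
  proof (rule inj_onI)
    fix a b assume a: "a \<in> l2" and b: "b \<in> l2"
      and eq: "synthesis_op (dsum_op J1 J2) (\<lambda>n. (x n, y n)) a = synthesis_op (dsum_op J1 J2) (\<lambda>n. (x n, y n)) b"
    define d where "d n = a n - b n" for n
    have dl2: "d \<in> l2" unfolding d_def by (rule l2_diff[OF a b])
    have e1: "synthesis_op J1 x a = synthesis_op J1 x b" and e2: "synthesis_op J2 y a = synthesis_op J2 y b"
      using eq synth[OF a] synth[OF b] by auto
    have T1: "synthesis_op J1 x d = 0"
    proof -
      have "synthesis_op J1 x d = (\<Sum>n. cscale J1 (a n) (x n) - cscale J1 (b n) (x n))"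
        by (simp add: synthesis_op_def d_def cscale_diff)
      also have "\<dots> = synthesis_op J1 x a - synthesis_op J1 x b"
        unfolding synthesis_op_def
        by (rule suminf_diff[symmetric]) (rule synth_summable[OF J1 AB1(2) bes1]; fact)+
      finally show ?thesis using e1 by simp
    qed
    have T2: "synthesis_op J2 y d = 0"
    proof -
      have "synthesis_op J2 y d = (\<Sum>n. cscale J2 (a n) (y n) - cscale J2 (b n) (y n))"
        by (simp add: synthesis_op_def d_def cscale_diff)
      also have "\<dots> = synthesis_op J2 y a - synthesis_op J2 y b"
        unfolding synthesis_op_def
        by (rule suminf_diff[symmetric]) (rule synth_summable[OF J2 AB2(2) bes2]; fact)+
      finally show ?thesis using e2 by simp
    qed
    have o1: "l2_inner (analysis_op J1 x p) d = 0" for p by (rule synth_zero_orth[OF J1 AB1(2) bes1 dl2 T1])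
    have o2: "l2_inner (analysis_op J2 y q) d = 0" for q by (rule synth_zero_orth[OF J2 AB2(2) bes2 dl2 T2])
    have dcl: "d \<in> l2_closure (range (analysis_op J1 x))" unfolding hyp l2_orth_def using dl2 o2 by auto
    have small: "(\<Sum>n. (cmod (d n))\<^sup>2) < e\<^sup>2" if e: "e > 0" for e
    proof -
      obtain c where c: "c \<in> range (analysis_op J1 x)" and cn: "l2_norm (\<lambda>n. c n - d n) < e"
        using dcl e unfolding l2_closure_def by blast
      obtain p where cp: "c = analysis_op J1 x p" using c by blast
      have cl2: "c \<in> l2" using th1 cp by simp
      have "(\<Sum>n. (cmod (d n))\<^sup>2) \<le> (\<Sum>n. (cmod (c n - d n))\<^sup>2)"
        by (rule l2_small[OF dl2 cl2]) (use o1 cp in simp)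
      also have "\<dots> = (l2_norm (\<lambda>n. c n - d n))\<^sup>2"
        using l2_diff[OF cl2 dl2] by (simp add: l2_norm_def suminf_nonneg l2_memD)
      also have "\<dots> < e\<^sup>2" using cn l2_memD[OF l2_diff[OF cl2 dl2]] by (intro power_strict_mono) (auto simp: l2_norm_def suminf_nonneg)
      finally show ?thesis .
    qed
    have sd: "summable (\<lambda>n. (cmod (d n))\<^sup>2)" using dl2 by (rule l2_memD)
    have "(\<Sum>n. (cmod (d n))\<^sup>2) = 0"
    proof (rule ccontr)
      assume ne: "(\<Sum>n. (cmod (d n))\<^sup>2) \<noteq> 0"
      have "(\<Sum>n. (cmod (d n))\<^sup>2) \<ge> 0" using sd by (simp add: suminf_nonneg)
      hence pos: "(\<Sum>n. (cmod (d n))\<^sup>2) > 0" using ne by simp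
      have "(\<Sum>n. (cmod (d n))\<^sup>2) < (sqrt (\<Sum>n. (cmod (d n))\<^sup>2))\<^sup>2"
        using small[of "sqrt (\<Sum>n. (cmod (d n))\<^sup>2)"] pos by simp
      thus False using pos by simp
    qed
    hence "\<forall>n. (cmod (d n))\<^sup>2 = 0" using suminf_eq_zero_iff[OF sd] by simp
    thus "a = b" by (auto simp: d_def)
  qed
  show ?thesis unfolding kminimal_def using frame inj by blast
qed

end
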